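(* Suppose $\|\mu_a\|_\infty,\|\widehat\mu_a\|_\infty\le B<\infty$ a.s. for all $a$, and $\mathbb{P}\{\epsilon\le\widehat\pi_a(X)\le1-\epsilon\}=1$ for some $\epsilon>0$ and all $a$. Then $$\sup_{C\in\mathcal{C}_k}\big|\mathbb{P}\{\varphi_C(\widehat\eta)-\varphi_C(\eta)\}\big|\lesssim\max_a\|\widehat\mu_a-\mu_a\|_{\mathbb{P},1}+\max_a\|\widehat\mu_a-\mu_a\|\big(\|\widehat\mu_a-\mu_a\|+\|\widehat\pi_a-\pi_a\|\big).$$
   Context: $Z=(Y,A,X)\sim\mathbb{P}$, $A\in\mathcal{A}=\{1,\dots,p\}$. $\mu_a(X)=\mathbb{E}(Y\mid X,A=a)$, $\pi_a(X)=\mathbb{P}(A=a\mid X)$, $\mu=(\mu_1,\dots,\mu_p)^\top$, $\eta=\{\pi_a,\mu_a\}_a$; $\widehat\eta=\{\widehat\pi_a,\widehat\mu_a\}_a$ estimators held fixed under $\mathbb{P}$. $\varphi_{1,a}(Z;\eta)=\frac{\mathbb{1}(A=a)}{\pi_a(X)}\{Y-\mu_A(X)\}+\mu_a(X)$, $\varphi_{2,a}(Z;\eta)=2\mu_a(X)\frac{\mathbb{1}(A=a)}{\pi_a(X)}\{Y-\mu_A(X)\}+\mu_a^2(X)$, $\varphi_C(Z;\eta)=\sum_a\{\varphi_{2,a}(Z;\eta)-2\varphi_{1,a}(Z;\eta)[\Pi_C(\mu)]_a+[\Pi_C(\mu)]_a^2\}$, where at $\widehat\eta$ all of $\mu,\pi$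 (including inside $\Pi_C$) are replaced by $\widehat\mu,\widehat\pi$. Codebooks $C=\{c_1,\dots,c_k\}\subset\mathbb{R}^p$; $\mathcal{C}_k$ those of size $k$ in the image of $\mu$; $\Pi_C(x)=\arg\min_{c\in C}\|c-x\|_2^2$. $\|\cdot\|$ is the $L_2(\mathbb{P})$ norm, $\|f\|_{\mathbb{P},1}=\int|f|d\mathbb{P}$; $\lesssim$ inequality up to a multiplicative constant. *)

theory Defs
  imports "HOL-Probability.Probability"
begin

text \<open>Treatment levels are the elements of a finite type 'p (so p = CARD('p));
vectors in R^p are elements of real^'p.  Covariates live in a measurable space N.\<close>

definition proj_cb :: "(real^'p) set \<Rightarrow> real^'p \<Rightarrow> real^'p" where
  "proj_cb C x = arg_min_on (\<lambda>c. (norm (c - x))\<^sup>2) C"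

text \<open>Influence-function pieces, evaluated at a nuisance pair (m, q) = (mu, pi).\<close>
definition phi1 :: "'p \<Rightarrow> ('w \<Rightarrow> 'p) \<Rightarrow> ('w \<Rightarrow> real) \<Rightarrow> ('w \<Rightarrow> 'x)
    \<Rightarrow> ('x \<Rightarrow> real^'p) \<Rightarrow> ('x \<Rightarrow> real^'p) \<Rightarrow> 'w \<Rightarrow> real" where
  "phi1 a A Y X m q w =
     (if A w = a then 1 else 0) / (q (X w) $ a) * (Y w - m (X w) $ (A w)) + m (X w) $ a"

definition phi2 :: "'p \<Rightarrow> ('w \<Rightarrow> 'p) \<Rightarrow> ('w \<Rightarrow> real) \<Rightarrow> ('w \<Rightarrow> 'x)
    \<Rightarrow> ('x \<Rightarrow> real^'p) \<Rightarrow> ('x \<Rightarrow> real^'p) \<Rightarrow> 'w \<Rightarrow> real" where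
  "phi2 a A Y X m q w =
     2 * m (X w) $ a * ((if A w = a then 1 else 0) / (q (X w) $ a) * (Y w - m (X w) $ (A w)))
     + (m (X w) $ a)\<^sup>2"

definition phiC :: "(real^'p::finite) set \<Rightarrow> ('w \<Rightarrow> 'p) \<Rightarrow> ('w \<Rightarrow> real) \<Rightarrow> ('w \<Rightarrow> 'x)
    \<Rightarrow> ('x \<Rightarrow> real^'p) \<Rightarrow> ('x \<Rightarrow> real^'p) \<Rightarrow> 'w \<Rightarrow> real" where
  "phiC C A Y X m q w =
     (\<Sum>a\<in>UNIV. phi2 a A Y X m q w - 2 * phi1 a A Y X m q w * (proj_cb C (m (X w)) $ a)
                 + (proj_cb C (m (X w)) $ a)\<^sup>2)"

definition codebooks :: "nat \<Rightarrow> ('x \<Rightarrow> real^'p) \<Rightarrow> (real^'p) set set" where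
  "codebooks k m = {C. finite C \<and> card C = k \<and> C \<subseteq> range m}"

text \<open>The data-generating model: (Y, A, X) random variables on the probability space M,
X taking values in N; pi_a(X) = P(A = a | X) and mu_A(X) = E(Y | X, A) almost surely.\<close>
definition obs_model :: "'w measure \<Rightarrow> 'x measure \<Rightarrow> ('w \<Rightarrow> real) \<Rightarrow> ('w \<Rightarrow> 'p::finite)
    \<Rightarrow> ('w \<Rightarrow> 'x) \<Rightarrow> ('x \<Rightarrow> real^'p) \<Rightarrow> ('x \<Rightarrow> real^'p) \<Rightarrow> bool" where
  "obs_model M N Y A X m q \<longleftrightarrow>
     prob_space M \<and>
     Y \<in> borel_measurable M \<and> integrable M Y \<and>
     A \<in> measurable M (count_space UNIV) \<and>
     X \<in> measurable M N \<and>
     m \<in> borel_measurable N \<and> q \<in> borel_measurable N \<and>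
     (\<forall>a. AE w in M. q (X w) $ a =
        real_cond_exp M (vimage_algebra (space M) X N) (indicator {w. A w = a}) w) \<and>
     (AE w in M. m (X w) $ (A w) =
        real_cond_exp M (vimage_algebra (space M) (\<lambda>w. (X w, A w)) (N \<Otimes>\<^sub>M count_space UNIV)) Y w)"

definition L1norm :: "'w measure \<Rightarrow> ('w \<Rightarrow> real) \<Rightarrow> real" where
  "L1norm M f = (\<integral>w. \<bar>f w\<bar> \<partial>M)"

definition L2norm :: "'w measure \<Rightarrow> ('w \<Rightarrow> real) \<Rightarrow> real" where
  "L2norm M f = sqrt (\<integral>w. (f w)\<^sup>2 \<partial>M)"

end

theory Submission
  imports Defs
begin

lemma vec_nth_meas[measurable (raw)]:
  "f \<in> borel_measurable M \<Longrightarrow> (\<lambda>x. (f x :: real^'n) $ i) \<in> borel_measurable M"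
  by (rule measurable_compose[OF _ borel_measurable_nth])

lemma proj_empty: "proj_cb {} x = proj_cb {} y"
  by (simp add: proj_cb_def arg_min_on_def arg_min_def is_arg_min_def)

lemma sum_sq_norm: "(norm (v::real^'n))\<^sup>2 = (\<Sum>a\<in>UNIV. (v $ a)\<^sup>2)"
  unfolding norm_vec_def L2_set_def by (simp add: sum_nonneg)

lemma proj_min:
  fixes C :: "(real^'n) set"
  assumes "finite C"
  shows "(\<Sum>a\<in>UNIV. (y $ a - proj_cb C y $ a)\<^sup>2) \<le> (\<Sum>a\<in>UNIV. (y $ a - proj_cb C x $ a)\<^sup>2)"
proof (cases "C = {}")
  case True
  then show ?thesis using proj_empty[of y x] by simp
next
  case False
  have "proj_cb C x \<in> C" unfolding proj_cb_def by (rule arg_min_if_finite(1)[OF assms False])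
  then have "(norm (proj_cb C y - y))\<^sup>2 \<le> (norm (proj_cb C x - y))\<^sup>2"
    unfolding proj_cb_def by (rule arg_min_least[OF assms False])
  then show ?thesis unfolding sum_sq_norm by (simp add: power2_commute)
qed

lemma proj_bound:
  fixes C :: "(real^'p::finite) set" and mu :: "'x \<Rightarrow> real^'p"
  assumes C: "C \<in> codebooks k mu" and bd: "\<And>x a. \<bar>mu x $ a\<bar> \<le> B"
  shows "\<bar>proj_cb C z $ a\<bar> \<le> \<bar>B\<bar> + (\<Sum>a\<in>UNIV. \<bar>proj_cb {} (0::real^'p) $ a\<bar>)"
proof (cases "C = {}")
  case True
  have "\<bar>proj_cb {} (0::real^'p) $ a\<bar> \<le> (\<Sum>a\<in>UNIV. \<bar>proj_cb {} (0::real^'p) $ a\<bar>)"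
    by (rule member_le_sum) auto
  then show ?thesis using True proj_empty[of z 0] by simp
next
  case False
  have fin: "finite C" and sub: "C \<subseteq> range mu" using C unfolding codebooks_def by auto
  have "proj_cb C z \<in> C" unfolding proj_cb_def by (rule arg_min_if_finite(1)[OF fin False])
  then obtain x where "proj_cb C z = mu x" using sub by auto
  then have "\<bar>proj_cb C z $ a\<bar> \<le> \<bar>B\<bar>" using bd[of x a] by simp
  moreover have "0 \<le> (\<Sum>a\<in>UNIV. \<bar>proj_cb {} (0::real^'p) $ a\<bar>)" by (simp add: sum_nonneg)
  ultimately show ?thesis by linarith
qed

lemma sfs_vimage:
  assumes "prob_space M" "T \<in> measurable M N'"
  shows "sigma_finite_subalgebra M (vimage_algebra (space M) T N')"
proof -
  interpret prob_space M by fact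
  have "finite_measure_subalgebra M (vimage_algebra (space M) T N')"
    unfolding finite_measure_subalgebra_def finite_measure_subalgebra_axioms_def subalgebra_def
    using sets_image_in_sets[of M "space M" T N', OF refl assms(2)] finite_measure_axioms by simp
  then show ?thesis by (rule finite_measure_subalgebra_is_sigma_finite)
qed

lemma ce_repl:
  assumes sfs: "sigma_finite_subalgebra M F" and fm: "f \<in> borel_measurable F"
    and gm: "g \<in> borel_measurable M" and hm: "h \<in> borel_measurable M"
    and int: "integrable M (\<lambda>w. f w * g w)"
    and ae: "AE w in M. real_cond_exp M F g w = h w"
  shows "(\<integral>w. f w * g w \<partial>M) = (\<integral>w. f w * h w \<partial>M)"
proof -
  interpret sigma_finite_subalgebra M F by fact
  have fM: "f \<in> borel_measurable M" by (rule measurable_from_subalg[OF subalg fm])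
  have "(\<integral>w. f w * g w \<partial>M) = (\<integral>w. f w * real_cond_exp M F g w \<partial>M)"
    by (rule real_cond_exp_intg(2)[symmetric]) (use fm gm int in auto)
  also have "\<dots> = (\<integral>w. f w * h w \<partial>M)"
    by (rule integral_cong_AE) (use fM hm ae in auto)
  finally show ?thesis .
qed

lemma ce_orth:
  assumes sfs: "sigma_finite_subalgebra M F" and fm: "f \<in> borel_measurable F"
    and gm: "g \<in> borel_measurable M"
    and int: "integrable M (\<lambda>w. f w * g w)"
    and ae: "AE w in M. real_cond_exp M F g w = 0"
  shows "(\<integral>w. f w * g w \<partial>M) = 0"
  using ce_repl[OF sfs fm gm _ int ae] by simp

lemma sq_diff_bound:
  fixes u v c b :: real
  assumes "\<bar>u\<bar> \<le> b" "\<bar>v\<bar> \<le> b" "\<bar>c\<bar> \<le> b"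
  shows "(u - c)\<^sup>2 - (v - c)\<^sup>2 \<le> 4 * b * \<bar>u - v\<bar>"
proof -
  have "(u - c)\<^sup>2 - (v - c)\<^sup>2 = (u - v) * (u + v - 2 * c)" by (simp add: power2_eq_square algebra_simps)
  also have "\<dots> \<le> \<bar>u - v\<bar> * \<bar>u + v - 2 * c\<bar>" by (metis abs_ge_self abs_mult)
  also have "\<dots> \<le> \<bar>u - v\<bar> * (4 * b)" using assms by (intro mult_left_mono) auto
  finally show ?thesis by (simp add: mult.commute)
qed

lemma pointwise_bound:
  fixes m mh P Ph q qh :: "'p::finite \<Rightarrow> real" and b e :: real
  assumes e: "0 < e" and qh: "\<And>a. e \<le> qh a"
    and bd: "\<And>a. \<bar>m a\<bar> \<le> b" "\<And>a. \<bar>mh a\<bar> \<le> b" "\<And>a. \<bar>P a\<bar> \<le> b" "\<And>a. \<bar>Ph a\<bar> \<le> b"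
    and min1: "(\<Sum>a\<in>UNIV. (mh a - Ph a)\<^sup>2) \<le> (\<Sum>a\<in>UNIV. (mh a - P a)\<^sup>2)"
    and min2: "(\<Sum>a\<in>UNIV. (m a - P a)\<^sup>2) \<le> (\<Sum>a\<in>UNIV. (m a - Ph a)\<^sup>2)"
  shows "\<bar>(\<Sum>a\<in>UNIV. 2 * ((mh a - Ph a) * (m a - mh a) / qh a) * q a)
            + ((\<Sum>a\<in>UNIV. (mh a - Ph a)\<^sup>2) - (\<Sum>a\<in>UNIV. (m a - P a)\<^sup>2))\<bar>
         \<le> (\<Sum>a\<in>UNIV. 4 * b / e * (\<bar>mh a - m a\<bar> * \<bar>qh a - q a\<bar>) + 8 * b * \<bar>mh a - m a\<bar> + (mh a - m a)\<^sup>2)"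
proof -
  define \<alpha> where "\<alpha> a = - 2 * (mh a - Ph a) * (m a - mh a) * (qh a - q a) / qh a" for a
  define \<beta> where "\<beta> a = (m a - Ph a)\<^sup>2 - (m a - P a)\<^sup>2" for a
  define \<gamma> where "\<gamma> a = (m a - mh a)\<^sup>2" for a
  have b0: "0 \<le> b" using bd(1) by (meson abs_ge_zero order_trans)
  have qhpos: "qh a > 0" for a using qh[of a] e by linarith
  have "(\<Sum>a\<in>UNIV. 2 * ((mh a - Ph a) * (m a - mh a) / qh a) * q a)
            + ((\<Sum>a\<in>UNIV. (mh a - Ph a)\<^sup>2) - (\<Sum>a\<in>UNIV. (m a - P a)\<^sup>2))
        = (\<Sum>a\<in>UNIV. 2 * ((mh a - Ph a) * (m a - mh a) / qh a) * q a + (mh a - Ph a)\<^sup>2 - (m a - P a)\<^sup>2)"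
    by (simp add: sum.distrib sum_subtractf)
  also have "\<dots> = (\<Sum>a\<in>UNIV. \<alpha> a + \<beta> a - \<gamma> a)"
  proof (rule sum.cong[OF refl])
    fix a
    have "qh a \<noteq> 0" using qhpos[of a] by simp
    then show "2 * ((mh a - Ph a) * (m a - mh a) / qh a) * q a + (mh a - Ph a)\<^sup>2 - (m a - P a)\<^sup>2
          = \<alpha> a + \<beta> a - \<gamma> a"
      unfolding \<alpha>_def \<beta>_def \<gamma>_def by (simp add: field_simps power2_eq_square)
  qed
  also have "\<dots> = (\<Sum>a\<in>UNIV. \<alpha> a) + (\<Sum>a\<in>UNIV. \<beta> a) - (\<Sum>a\<in>UNIV. \<gamma> a)"
    by (simp add: sum.distrib sum_subtractf)
  finally have eq: "(\<Sum>a\<in>UNIV. 2 * ((mh a - Ph a) * (m a - mh a) / qh a) * q a)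
            + ((\<Sum>a\<in>UNIV. (mh a - Ph a)\<^sup>2) - (\<Sum>a\<in>UNIV. (m a - P a)\<^sup>2))
        = (\<Sum>a\<in>UNIV. \<alpha> a) + (\<Sum>a\<in>UNIV. \<beta> a) - (\<Sum>a\<in>UNIV. \<gamma> a)" .
  have beta0: "0 \<le> (\<Sum>a\<in>UNIV. \<beta> a)" using min2 unfolding \<beta>_def by (simp add: sum_subtractf)
  have "(\<Sum>a\<in>UNIV. \<beta> a) \<le> (\<Sum>a\<in>UNIV. ((m a - Ph a)\<^sup>2 - (mh a - Ph a)\<^sup>2) + ((mh a - P a)\<^sup>2 - (m a - P a)\<^sup>2))"
    using min1 unfolding \<beta>_def by (simp add: sum_subtractf sum.distrib)
  also have "\<dots> \<le> (\<Sum>a\<in>UNIV. 8 * b * \<bar>mh a - m a\<bar>)"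
  proof (rule sum_mono)
    fix a
    have "(m a - Ph a)\<^sup>2 - (mh a - Ph a)\<^sup>2 \<le> 4 * b * \<bar>m a - mh a\<bar>"
      using bd by (intro sq_diff_bound) auto
    moreover have "(mh a - P a)\<^sup>2 - (m a - P a)\<^sup>2 \<le> 4 * b * \<bar>mh a - m a\<bar>"
      using bd by (intro sq_diff_bound) auto
    ultimately show "((m a - Ph a)\<^sup>2 - (mh a - Ph a)\<^sup>2) + ((mh a - P a)\<^sup>2 - (m a - P a)\<^sup>2)
        \<le> 8 * b * \<bar>mh a - m a\<bar>" by (simp add: abs_minus_commute)
  qed
  finally have beta1: "(\<Sum>a\<in>UNIV. \<beta> a) \<le> (\<Sum>a\<in>UNIV. 8 * b * \<bar>mh a - m a\<bar>)" .
  have alpha: "\<bar>\<Sum>a\<in>UNIV. \<alpha> a\<bar> \<le> (\<Sum>a\<in>UNIV. 4 * b / e * (\<bar>mh a - m a\<bar> * \<bar>qh a - q a\<bar>))"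
  proof -
    have "\<bar>\<Sum>a\<in>UNIV. \<alpha> a\<bar> \<le> (\<Sum>a\<in>UNIV. \<bar>\<alpha> a\<bar>)" by (rule sum_abs)
    also have "\<dots> \<le> (\<Sum>a\<in>UNIV. 4 * b / e * (\<bar>mh a - m a\<bar> * \<bar>qh a - q a\<bar>))"
    proof (rule sum_mono)
      fix a
      have "\<bar>\<alpha> a\<bar> = 2 * \<bar>mh a - Ph a\<bar> * (\<bar>mh a - m a\<bar> * \<bar>qh a - q a\<bar>) / qh a"
        unfolding \<alpha>_def using qhpos[of a] by (simp add: abs_mult abs_minus_commute abs_divide) (simp add: abs_if algebra_simps)
      also have "\<dots> \<le> 2 * (2 * b) * (\<bar>mh a - m a\<bar> * \<bar>qh a - q a\<bar>) / e"
      proof (rule frac_le)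
        have "\<bar>mh a - Ph a\<bar> \<le> 2 * b" using bd(2)[of a] bd(4)[of a] by linarith
        then show "2 * \<bar>mh a - Ph a\<bar> * (\<bar>mh a - m a\<bar> * \<bar>qh a - q a\<bar>) \<le> 2 * (2 * b) * (\<bar>mh a - m a\<bar> * \<bar>qh a - q a\<bar>)"
          by (intro mult_right_mono) auto
      qed (use b0 e qh[of a] in auto)
      finally show "\<bar>\<alpha> a\<bar> \<le> 4 * b / e * (\<bar>mh a - m a\<bar> * \<bar>qh a - q a\<bar>)" by simp
    qed
    finally show ?thesis .
  qed
  have gamma: "(\<Sum>a\<in>UNIV. \<gamma> a) = (\<Sum>a\<in>UNIV. (mh a - m a)\<^sup>2)"
    unfolding \<gamma>_def by (simp add: power2_commute)
  have g0: "0 \<le> (\<Sum>a\<in>UNIV. \<gamma> a)" unfolding \<gamma>_def by (simp add: sum_nonneg)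
  have "\<bar>(\<Sum>a\<in>UNIV. \<alpha> a) + (\<Sum>a\<in>UNIV. \<beta> a) - (\<Sum>a\<in>UNIV. \<gamma> a)\<bar>
       \<le> \<bar>\<Sum>a\<in>UNIV. \<alpha> a\<bar> + (\<Sum>a\<in>UNIV. \<beta> a) + (\<Sum>a\<in>UNIV. \<gamma> a)"
    using beta0 g0 by linarith
  also have "\<dots> \<le> (\<Sum>a\<in>UNIV. 4 * b / e * (\<bar>mh a - m a\<bar> * \<bar>qh a - q a\<bar>)) + (\<Sum>a\<in>UNIV. 8 * b * \<bar>mh a - m a\<bar>)
     + (\<Sum>a\<in>UNIV. (mh a - m a)\<^sup>2)" using alpha beta1 gamma by linarith
  also have "\<dots> = (\<Sum>a\<in>UNIV. 4 * b / e * (\<bar>mh a - m a\<bar> * \<bar>qh a - q a\<bar>) + 8 * b * \<bar>mh a - m a\<bar> + (mh a - m a)\<^sup>2)"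
    by (simp add: sum.distrib)
  finally show ?thesis using eq by simp
qed

lemma discr_aux:
  fixes F G I :: real
  assumes F: "0 \<le> F" and G: "0 \<le> G" and I: "0 \<le> I" and h: "\<And>t. 0 \<le> t\<^sup>2 * F - 2 * t * I + G"
  shows "I \<le> sqrt F * sqrt G"
proof (cases "F = 0")
  case True
  show ?thesis
  proof (rule ccontr)
    assume "\<not> ?thesis"
    then have "I > 0" using True by simp
    have "0 \<le> ((G+1)/(2*I))\<^sup>2 * F - 2 * ((G+1)/(2*I)) * I + G" by (rule h)
    also have "\<dots> = -1" using True \<open>I > 0\<close> by (simp add: field_simps)
    finally show False by simp
  qed
next
  case False
  then have Fp: "F > 0" using F by simp
  have "0 \<le> (I/F)\<^sup>2 * F - 2 * (I/F) * I + G" by (rule h)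
  also have "\<dots> = G - I\<^sup>2 / F" using Fp by (simp add: field_simps power2_eq_square)
  finally have "I\<^sup>2 \<le> F * G" using Fp by (simp add: field_simps)
  then have "sqrt (I\<^sup>2) \<le> sqrt (F * G)" by (rule real_sqrt_le_mono)
  then show ?thesis using I by (simp add: real_sqrt_mult)
qed

lemma cs_integral:
  fixes f g :: "'a \<Rightarrow> real"
  assumes f2: "integrable M (\<lambda>x. (f x)\<^sup>2)" and g2: "integrable M (\<lambda>x. (g x)\<^sup>2)"
    and fg: "integrable M (\<lambda>x. f x * g x)"
  shows "(\<integral>x. \<bar>f x\<bar> * \<bar>g x\<bar> \<partial>M) \<le> sqrt (\<integral>x. (f x)\<^sup>2 \<partial>M) * sqrt (\<integral>x. (g x)\<^sup>2 \<partial>M)"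
proof (rule discr_aux)
  have ifg: "integrable M (\<lambda>x. \<bar>f x\<bar> * \<bar>g x\<bar>)"
    using integrable_abs[OF fg] by (simp add: abs_mult)
  show "0 \<le> (\<integral>x. (f x)\<^sup>2 \<partial>M)" "0 \<le> (\<integral>x. (g x)\<^sup>2 \<partial>M)" "0 \<le> (\<integral>x. \<bar>f x\<bar> * \<bar>g x\<bar> \<partial>M)"
    by (auto intro!: integral_nonneg_AE)
  fix t :: real
  have "0 \<le> (\<integral>x. (t * \<bar>f x\<bar> - \<bar>g x\<bar>)\<^sup>2 \<partial>M)" by (auto intro!: integral_nonneg_AE)
  also have "(\<integral>x. (t * \<bar>f x\<bar> - \<bar>g x\<bar>)\<^sup>2 \<partial>M)
     = (\<integral>x. t\<^sup>2 * (f x)\<^sup>2 - 2 * t * (\<bar>f x\<bar> * \<bar>g x\<bar>) + (g x)\<^sup>2 \<partial>M)"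
    by (rule Bochner_Integration.integral_cong[OF refl]) (simp add: power2_eq_square algebra_simps)
  also have "\<dots> = t\<^sup>2 * (\<integral>x. (f x)\<^sup>2 \<partial>M) - 2 * t * (\<integral>x. \<bar>f x\<bar> * \<bar>g x\<bar> \<partial>M) + (\<integral>x. (g x)\<^sup>2 \<partial>M)"
    using f2 g2 ifg by simp
  finally show "0 \<le> t\<^sup>2 * (\<integral>x. (f x)\<^sup>2 \<partial>M) - 2 * t * (\<integral>x. \<bar>f x\<bar> * \<bar>g x\<bar> \<partial>M) + (\<integral>x. (g x)\<^sup>2 \<partial>M)" .
qed

lemma final_arith:
  fixes L1 L2 L3 :: "'p::finite \<Rightarrow> real" and c1 c2 :: real
  assumes c: "0 \<le> c1" "0 \<le> c2" and L: "\<And>a. 0 \<le> L1 a" "\<And>a. 0 \<le> L2 a" "\<And>a. 0 \<le> L3 a"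
  shows "(\<Sum>a\<in>UNIV. c1 * (L2 a * L3 a) + c2 * L1 a + (L2 a)\<^sup>2)
     \<le> (real CARD('p) * (c1 + 1 + c2)) * ((MAX a\<in>UNIV. L1 a) + (MAX a\<in>UNIV. L2 a * (L2 a + L3 a)))"
proof -
  define M1 where "M1 = (MAX a\<in>UNIV. L1 a)"
  define M2 where "M2 = (MAX a\<in>UNIV. L2 a * (L2 a + L3 a))"
  have m1: "L1 a \<le> M1" for a unfolding M1_def by (rule Max_ge) auto
  have m2: "L2 a * (L2 a + L3 a) \<le> M2" for a unfolding M2_def by (rule Max_ge) auto
  have M1p: "0 \<le> M1" using m1 L(1) by (meson order_trans)
  have M2p: "0 \<le> M2" using m2[of undefined] L(2)[of undefined] L(3)[of undefined]
    by (meson add_nonneg_nonneg mult_nonneg_nonneg order_trans)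
  have "(\<Sum>a\<in>UNIV. c1 * (L2 a * L3 a) + c2 * L1 a + (L2 a)\<^sup>2) \<le> of_nat (card (UNIV::'p set)) * ((c1 + 1 + c2) * (M1 + M2))"
  proof (rule sum_bounded_above)
    fix a :: 'p
    have "c1 * (L2 a * L3 a) + c2 * L1 a + (L2 a)\<^sup>2 \<le> (c1 + 1) * (L2 a * (L2 a + L3 a)) + c2 * L1 a"
      using c L[of a] by (simp add: algebra_simps power2_eq_square mult_nonneg_nonneg)
    also have "\<dots> \<le> (c1 + 1) * M2 + c2 * M1"
      using c m1[of a] m2[of a] by (intro add_mono mult_left_mono) auto
    also have "\<dots> \<le> (c1 + 1 + c2) * (M1 + M2)"
      using c M1p M2p by (simp add: algebra_simps mult_nonneg_nonneg)
    finally show "c1 * (L2 a * L3 a) + c2 * L1 a + (L2 a)\<^sup>2 \<le> (c1 + 1 + c2) * (M1 + M2)" .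
  qed
  then show ?thesis unfolding M1_def M2_def by (simp add: mult.assoc)
qed

lemma proj_eq_some:
  "proj_cb C x = (SOME y. y \<in> {y\<in>C. \<forall>z\<in>C. (norm (y - x))\<^sup>2 \<le> (norm (z - x))\<^sup>2})"
  unfolding proj_cb_def arg_min_on_def arg_min_def is_arg_min_linorder by (simp add: Ball_def)

lemma proj_meas:
  fixes C :: "(real^'p::finite) set"
  assumes "finite C"
  shows "proj_cb C \<in> borel_measurable borel"
proof -
  define S where "S x = {y\<in>C. \<forall>z\<in>C. (norm (y - x))\<^sup>2 \<le> (norm (z - x))\<^sup>2}" for x :: "real^'p"
  have S: "S \<in> measurable borel (count_space (Pow C))"
  proof (subst measurable_count_space_eq2)
    show "finite (Pow C)" using assms by simp
    show "S \<in> space borel \<rightarrow> Pow C \<and> (\<forall>a\<in>Pow C. S -` {a} \<inter> space borel \<in> sets borel)"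
    proof (intro conjI ballI)
      fix T assume "T \<in> Pow C"
      have "S -` {T} \<inter> space borel = {x \<in> space borel. \<forall>y\<in>C. (y \<in> T) = (\<forall>z\<in>C. (norm (y - x))\<^sup>2 \<le> (norm (z - x))\<^sup>2)}"
        using \<open>T \<in> Pow C\<close> unfolding S_def by auto
      also have "\<dots> \<in> sets borel" using assms by measurable
      finally have "S -` {T} \<inter> space borel \<in> sets borel" .
      then show "S -` {T} \<inter> space borel \<in> sets borel" by simp
    qed (auto simp: S_def)
  qed
  have "proj_cb C = (\<lambda>x. (\<lambda>T x. SOME y. y \<in> T) (S x) x)"
    by (rule ext) (simp add: proj_eq_some S_def)
  also have "\<dots> \<in> borel_measurable borel"
    by (rule measurable_compose_countable'[OF _ S]) (auto intro: countable_finite simp: assms)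
  finally show ?thesis .
qed

lemma int_lin3:
  fixes f g h :: "'a \<Rightarrow> real"
  assumes "integrable M f" "integrable M g" "integrable M h"
  shows "(\<integral>w. 2 * f w - 2 * g w + 2 * h w \<partial>M) = 2 * integral\<^sup>L M f - 2 * integral\<^sup>L M g + 2 * integral\<^sup>L M h"
  using assms by simp

lemma int2m:
  fixes f g :: "'a \<Rightarrow> real"
  shows "integrable M (\<lambda>w. f w * g w) \<Longrightarrow> integrable M (\<lambda>w. 2 * f w * g w)"
  by (simp add: mult.assoc)

lemma int2:
  fixes f g :: "'a \<Rightarrow> real"
  shows "(\<integral>w. 2 * f w * g w \<partial>M) = 2 * (\<integral>w. f w * g w \<partial>M)"
  by (simp add: mult.assoc)

lemma main_bound:
  fixes M :: "'w measure" and N :: "'x measure" and Y :: "'w \<Rightarrow> real" and A :: "'w \<Rightarrow> 'p::finite"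
    and X :: "'w \<Rightarrow> 'x" and mu q muh qh :: "'x \<Rightarrow> real^'p" and B \<epsilon> :: real
  assumes e: "0 < \<epsilon>"
    and obs: "obs_model M N Y A X mu q"
    and muhm[measurable]: "muh \<in> borel_measurable N" and qhm[measurable]: "qh \<in> borel_measurable N"
    and bd: "\<forall>a x. \<bar>mu x $ a\<bar> \<le> B \<and> \<bar>muh x $ a\<bar> \<le> B"
    and qhAE: "\<forall>a. AE w in M. \<epsilon> \<le> qh (X w) $ a \<and> qh (X w) $ a \<le> 1 - \<epsilon>"
    and hint: "\<forall>a. integrable M (\<lambda>w. (if A w = a then 1 else 0) / (q (X w) $ a) * (Y w - mu (X w) $ a))"
    and C: "C \<in> codebooks k mu"
  shows "\<bar>\<integral>w. phiC C A Y X muh qh w - phiC C A Y X mu q w \<partial>M\<bar>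
           \<le> (real CARD('p) * (4 * (\<bar>B\<bar> + (\<Sum>a\<in>UNIV. \<bar>proj_cb {} (0::real^'p) $ a\<bar>)) / \<epsilon> + 1
                 + 8 * (\<bar>B\<bar> + (\<Sum>a\<in>UNIV. \<bar>proj_cb {} (0::real^'p) $ a\<bar>))))
              * ((MAX a\<in>UNIV. L1norm M (\<lambda>w. muh (X w) $ a - mu (X w) $ a))
                 + (MAX a\<in>UNIV. L2norm M (\<lambda>w. muh (X w) $ a - mu (X w) $ a)
                      * (L2norm M (\<lambda>w. muh (X w) $ a - mu (X w) $ a)
                         + L2norm M (\<lambda>w. qh (X w) $ a - q (X w) $ a))))"
proof -
  define b where "b = \<bar>B\<bar> + (\<Sum>a\<in>UNIV. \<bar>proj_cb {} (0::real^'p) $ a\<bar>)"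
  define F1 where "F1 = vimage_algebra (space M) X N"
  define F2 where "F2 = vimage_algebra (space M) (\<lambda>w. (X w, A w)) (N \<Otimes>\<^sub>M count_space UNIV)"
  have ps: "prob_space M" and Ym[measurable]: "Y \<in> borel_measurable M" and Yi: "integrable M Y"
    and Am[measurable]: "A \<in> measurable M (count_space UNIV)" and Xm[measurable]: "X \<in> measurable M N"
    and mum[measurable]: "mu \<in> borel_measurable N" and qm[measurable]: "q \<in> borel_measurable N"
    and qce: "\<And>a. AE w in M. q (X w) $ a = real_cond_exp M F1 (indicator {w. A w = a}) w"
    and mce: "AE w in M. mu (X w) $ (A w) = real_cond_exp M F2 Y w"
    using obs unfolding obs_model_def F1_def F2_def by blast+
  interpret prob_space M by (rule ps)
  have fin: "finite C" using C unfolding codebooks_def by auto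
  note proj_meas[OF fin, measurable]
  have b0: "0 \<le> b" unfolding b_def by (simp add: sum_nonneg)
  have s0: "0 \<le> (\<Sum>a\<in>UNIV. \<bar>proj_cb {} (0::real^'p) $ a\<bar>)" by (simp add: sum_nonneg)
  have bmu: "\<bar>mu x $ a\<bar> \<le> b" for x a
  proof -
    have "\<bar>mu x $ a\<bar> \<le> B" using bd by blast
    then show ?thesis using s0 unfolding b_def by linarith
  qed
  have bmuh: "\<bar>muh x $ a\<bar> \<le> b" for x a
  proof -
    have "\<bar>muh x $ a\<bar> \<le> B" using bd by blast
    then show ?thesis using s0 unfolding b_def by linarith
  qed
  have bP: "\<bar>proj_cb C z $ a\<bar> \<le> b" for z a unfolding b_def
    by (rule proj_bound[OF C]) (use bd in auto)
  have sfs1: "sigma_finite_subalgebra M F1" unfolding F1_def by (rule sfs_vimage[OF ps Xm])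
  have XAm[measurable]: "(\<lambda>w. (X w, A w)) \<in> measurable M (N \<Otimes>\<^sub>M count_space UNIV)" by measurable
  have sfs2: "sigma_finite_subalgebra M F2" unfolding F2_def by (rule sfs_vimage[OF ps XAm])
  have vF1: "X \<in> measurable F1 N" unfolding F1_def
    by (rule measurable_vimage_algebra1) (use measurable_space[OF Xm] in auto)
  have vF2: "(\<lambda>w. (X w, A w)) \<in> measurable F2 (N \<Otimes>\<^sub>M count_space UNIV)" unfolding F2_def
    by (rule measurable_vimage_algebra1) (use measurable_space[OF XAm] in auto)

  have muAm[measurable]: "(\<lambda>w. mu (X w) $ A w) \<in> borel_measurable M"
  proof -
    have fi: "(\<lambda>w. mu (X w) $ i) \<in> borel_measurable M" for i by measurable
    show ?thesis by (rule measurable_compose_countable'[where I=UNIV, OF fi Am]) (auto intro: countable_finite)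
  qed
  have muAi: "integrable M (\<lambda>w. mu (X w) $ A w)"
    by (rule integrable_const_bound[where B=b]) (use bmu in auto)
  have Zi: "integrable M (\<lambda>w. Y w - mu (X w) $ A w)" using Yi muAi by simp
  have muAF2: "(\<lambda>w. mu (X w) $ A w) \<in> borel_measurable F2"
  proof -
    have "(\<lambda>w. (\<lambda>(x, b). mu x $ b) (X w, A w)) \<in> borel_measurable F2"
      by (rule measurable_compose[OF vF2]) measurable
    then show ?thesis by simp
  qed
  have ceZ: "AE w in M. real_cond_exp M F2 (\<lambda>w. Y w - mu (X w) $ A w) w = 0"
  proof -
    have 1: "AE w in M. real_cond_exp M F2 (\<lambda>w. Y w - mu (X w) $ A w) w
       = real_cond_exp M F2 Y w - real_cond_exp M F2 (\<lambda>w. mu (X w) $ A w) w"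
      by (rule sigma_finite_subalgebra.real_cond_exp_diff[OF sfs2 Yi muAi])
    have 2: "AE w in M. real_cond_exp M F2 (\<lambda>w. mu (X w) $ A w) w = mu (X w) $ A w"
      by (rule sigma_finite_subalgebra.real_cond_exp_F_meas[OF sfs2 muAi muAF2])
    show ?thesis using 1 2 mce by eventually_elim simp
  qed
  have qAE: "AE w in M. \<forall>a\<in>UNIV. 0 \<le> q (X w) $ a \<and> q (X w) $ a \<le> 1"
  proof (rule AE_finite_allI, simp)
    fix a
    have im: "indicator {w. A w = a} \<in> borel_measurable M" by measurable
    have ii: "integrable M (indicator {w. A w = a} :: 'w \<Rightarrow> real)"
      by (rule integrable_const_bound[where B=1]) (auto simp: indicator_def)
    have 1: "AE w in M. 0 \<le> real_cond_exp M F1 (indicator {w. A w = a}) w"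
      by (rule sigma_finite_subalgebra.real_cond_exp_pos[OF sfs1]) (use im in auto)
    have 2: "AE w in M. real_cond_exp M F1 (indicator {w. A w = a}) w \<le> 1"
      by (rule sigma_finite_subalgebra.real_cond_exp_le_c[OF sfs1 ii]) (auto simp: indicator_def)
    show "AE w in M. 0 \<le> q (X w) $ a \<and> q (X w) $ a \<le> 1"
      using 1 2 qce[of a] by eventually_elim simp
  qed
  have qhAE2: "AE w in M. \<forall>a\<in>UNIV. \<epsilon> \<le> qh (X w) $ a \<and> qh (X w) $ a \<le> 1 - \<epsilon>"
    by (rule AE_finite_allI) (use qhAE in auto)
  have ident: "phiC C A Y X muh qh w - phiC C A Y X mu q w =
     (\<Sum>a\<in>UNIV. 2 * (((muh (X w) $ a - proj_cb C (muh (X w)) $ a) / qh (X w) $ a * (if A w = a then 1 else 0)) * (Y w - mu (X w) $ A w))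
       - 2 * (((mu (X w) $ a - proj_cb C (mu (X w)) $ a) * (if A w = a then 1 else 0) / q (X w) $ a) * (Y w - mu (X w) $ A w))
       + 2 * (((muh (X w) $ a - proj_cb C (muh (X w)) $ a) * (mu (X w) $ a - muh (X w) $ a) / qh (X w) $ a) * (if A w = a then 1 else 0)))
     + ((\<Sum>a\<in>UNIV. (muh (X w) $ a - proj_cb C (muh (X w)) $ a)\<^sup>2) - (\<Sum>a\<in>UNIV. (mu (X w) $ a - proj_cb C (mu (X w)) $ a)\<^sup>2))"
    for w
  proof -
    have "phiC C A Y X muh qh w - phiC C A Y X mu q w =
       (\<Sum>a\<in>UNIV. (phi2 a A Y X muh qh w - 2 * phi1 a A Y X muh qh w * (proj_cb C (muh (X w)) $ a) + (proj_cb C (muh (X w)) $ a)\<^sup>2)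
          - (phi2 a A Y X mu q w - 2 * phi1 a A Y X mu q w * (proj_cb C (mu (X w)) $ a) + (proj_cb C (mu (X w)) $ a)\<^sup>2))"
      unfolding phiC_def by (simp add: sum_subtractf)
    also have "\<dots> = (\<Sum>a\<in>UNIV. 2 * (((muh (X w) $ a - proj_cb C (muh (X w)) $ a) / qh (X w) $ a * (if A w = a then 1 else 0)) * (Y w - mu (X w) $ A w))
       - 2 * (((mu (X w) $ a - proj_cb C (mu (X w)) $ a) * (if A w = a then 1 else 0) / q (X w) $ a) * (Y w - mu (X w) $ A w))
       + 2 * (((muh (X w) $ a - proj_cb C (muh (X w)) $ a) * (mu (X w) $ a - muh (X w) $ a) / qh (X w) $ a) * (if A w = a then 1 else 0))
       + ((muh (X w) $ a - proj_cb C (muh (X w)) $ a)\<^sup>2 - (mu (X w) $ a - proj_cb C (mu (X w)) $ a)\<^sup>2))"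
    proof (rule sum.cong[OF refl])
      fix a
      show "(phi2 a A Y X muh qh w - 2 * phi1 a A Y X muh qh w * (proj_cb C (muh (X w)) $ a) + (proj_cb C (muh (X w)) $ a)\<^sup>2)
          - (phi2 a A Y X mu q w - 2 * phi1 a A Y X mu q w * (proj_cb C (mu (X w)) $ a) + (proj_cb C (mu (X w)) $ a)\<^sup>2)
          = 2 * (((muh (X w) $ a - proj_cb C (muh (X w)) $ a) / qh (X w) $ a * (if A w = a then 1 else 0)) * (Y w - mu (X w) $ A w))
       - 2 * (((mu (X w) $ a - proj_cb C (mu (X w)) $ a) * (if A w = a then 1 else 0) / q (X w) $ a) * (Y w - mu (X w) $ A w))
       + 2 * (((muh (X w) $ a - proj_cb C (muh (X w)) $ a) * (mu (X w) $ a - muh (X w) $ a) / qh (X w) $ a) * (if A w = a then 1 else 0))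
       + ((muh (X w) $ a - proj_cb C (muh (X w)) $ a)\<^sup>2 - (mu (X w) $ a - proj_cb C (mu (X w)) $ a)\<^sup>2)"
        unfolding phi1_def phi2_def
        by (cases "A w = a") (simp_all add: divide_inverse algebra_simps power2_eq_square)
    qed
    also have "\<dots> = (\<Sum>a\<in>UNIV. 2 * (((muh (X w) $ a - proj_cb C (muh (X w)) $ a) / qh (X w) $ a * (if A w = a then 1 else 0)) * (Y w - mu (X w) $ A w))
       - 2 * (((mu (X w) $ a - proj_cb C (mu (X w)) $ a) * (if A w = a then 1 else 0) / q (X w) $ a) * (Y w - mu (X w) $ A w))
       + 2 * (((muh (X w) $ a - proj_cb C (muh (X w)) $ a) * (mu (X w) $ a - muh (X w) $ a) / qh (X w) $ a) * (if A w = a then 1 else 0)))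
     + ((\<Sum>a\<in>UNIV. (muh (X w) $ a - proj_cb C (muh (X w)) $ a)\<^sup>2) - (\<Sum>a\<in>UNIV. (mu (X w) $ a - proj_cb C (mu (X w)) $ a)\<^sup>2))"
      by (simp add: sum.distrib sum_subtractf)
    finally show ?thesis .
  qed
  have bf1: "AE w in M. \<bar>((muh (X w) $ a - proj_cb C (muh (X w)) $ a) / qh (X w) $ a * (if A w = a then 1 else 0))\<bar> \<le> 2 * b / \<epsilon>" for a
    using qhAE2
  proof eventually_elim
    case (elim w)
    have q: "\<epsilon> \<le> qh (X w) $ a" using elim by auto
    have n: "\<bar>muh (X w) $ a - proj_cb C (muh (X w)) $ a\<bar> \<le> 2 * b" using bmuh[of "X w" a] bP[of "muh (X w)" a] by linarith
    have "\<bar>((muh (X w) $ a - proj_cb C (muh (X w)) $ a) / qh (X w) $ a * (if A w = a then 1 else 0))\<bar> \<le> \<bar>muh (X w) $ a - proj_cb C (muh (X w)) $ a\<bar> / qh (X w) $ a"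
      using q e by (simp add: abs_mult abs_divide)
    also have "\<dots> \<le> 2 * b / \<epsilon>" using n q e b0 by (intro frac_le) auto
    finally show ?case .
  qed
  have be: "AE w in M. \<bar>((muh (X w) $ a - proj_cb C (muh (X w)) $ a) * (mu (X w) $ a - muh (X w) $ a) / qh (X w) $ a)\<bar> \<le> 2 * b * (2 * b) / \<epsilon>" for a
    using qhAE2
  proof eventually_elim
    case (elim w)
    have q: "\<epsilon> \<le> qh (X w) $ a" using elim by auto
    have n: "\<bar>muh (X w) $ a - proj_cb C (muh (X w)) $ a\<bar> \<le> 2 * b" using bmuh[of "X w" a] bP[of "muh (X w)" a] by linarith
    have n2: "\<bar>mu (X w) $ a - muh (X w) $ a\<bar> \<le> 2 * b" using bmuh[of "X w" a] bmu[of "X w" a] by linarith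
    have "\<bar>((muh (X w) $ a - proj_cb C (muh (X w)) $ a) * (mu (X w) $ a - muh (X w) $ a) / qh (X w) $ a)\<bar> = \<bar>muh (X w) $ a - proj_cb C (muh (X w)) $ a\<bar> * \<bar>mu (X w) $ a - muh (X w) $ a\<bar> / qh (X w) $ a"
      using q e by (simp add: abs_mult abs_divide)
    also have "\<dots> \<le> 2 * b * (2 * b) / \<epsilon>" using n n2 q e b0 by (intro frac_le mult_mono) auto
    finally show ?case .
  qed
  have i1: "integrable M (\<lambda>w. ((muh (X w) $ a - proj_cb C (muh (X w)) $ a) / qh (X w) $ a * (if A w = a then 1 else 0)) * (Y w - mu (X w) $ A w))" for a
  proof (rule Bochner_Integration.integrable_bound[OF integrable_mult_right[OF Zi, of "2 * b / \<epsilon>"]])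
    show "(\<lambda>w. ((muh (X w) $ a - proj_cb C (muh (X w)) $ a) / qh (X w) $ a * (if A w = a then 1 else 0)) * (Y w - mu (X w) $ A w)) \<in> borel_measurable M" by measurable
    show "AE w in M. norm (((muh (X w) $ a - proj_cb C (muh (X w)) $ a) / qh (X w) $ a * (if A w = a then 1 else 0)) * (Y w - mu (X w) $ A w)) \<le> norm (2 * b / \<epsilon> * (Y w - mu (X w) $ A w))"
      using bf1[of a]
    proof eventually_elim
      case (elim w)
      have c: "\<bar>2 * b / \<epsilon>\<bar> = 2 * b / \<epsilon>" using b0 e by simp
      have "\<bar>((muh (X w) $ a - proj_cb C (muh (X w)) $ a) / qh (X w) $ a * (if A w = a then 1 else 0)) * (Y w - mu (X w) $ A w)\<bar> = \<bar>((muh (X w) $ a - proj_cb C (muh (X w)) $ a) / qh (X w) $ a * (if A w = a then 1 else 0))\<bar> * \<bar>(Y w - mu (X w) $ A w)\<bar>" by (rule abs_mult)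
      also have "\<dots> \<le> 2 * b / \<epsilon> * \<bar>(Y w - mu (X w) $ A w)\<bar>" by (rule mult_right_mono[OF elim]) simp
      also have "\<dots> = \<bar>2 * b / \<epsilon> * (Y w - mu (X w) $ A w)\<bar>" unfolding abs_mult[of "2 * b / \<epsilon>"] c ..
      finally show ?case by simp
    qed
  qed
  have i2: "integrable M (\<lambda>w. ((mu (X w) $ a - proj_cb C (mu (X w)) $ a) * (if A w = a then 1 else 0) / q (X w) $ a) * (Y w - mu (X w) $ A w))" for a
  proof -
    have "integrable M (\<lambda>w. (mu (X w) $ a - proj_cb C (mu (X w)) $ a) * ((if A w = a then 1 else 0) / (q (X w) $ a) * (Y w - mu (X w) $ a)))"
    proof -
      have hi: "integrable M (\<lambda>w. ((if A w = a then 1 else 0) / (q (X w) $ a) * (Y w - mu (X w) $ a)))" using hint by blast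
      show ?thesis
    proof (rule Bochner_Integration.integrable_bound[OF integrable_mult_right[OF hi, of "2 * b"]])
      show "(\<lambda>w. (mu (X w) $ a - proj_cb C (mu (X w)) $ a) * ((if A w = a then 1 else 0) / (q (X w) $ a) * (Y w - mu (X w) $ a))) \<in> borel_measurable M" by measurable
      show "AE w in M. norm ((mu (X w) $ a - proj_cb C (mu (X w)) $ a) * ((if A w = a then 1 else 0) / (q (X w) $ a) * (Y w - mu (X w) $ a))) \<le> norm (2 * b * ((if A w = a then 1 else 0) / (q (X w) $ a) * (Y w - mu (X w) $ a)))"
      proof (rule AE_I2)
        fix w
        have n: "\<bar>mu (X w) $ a - proj_cb C (mu (X w)) $ a\<bar> \<le> 2 * b" using bmu[of "X w" a] bP[of "mu (X w)" a] by linarith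
        have "\<bar>(mu (X w) $ a - proj_cb C (mu (X w)) $ a) * ((if A w = a then 1 else 0) / (q (X w) $ a) * (Y w - mu (X w) $ a))\<bar> = \<bar>mu (X w) $ a - proj_cb C (mu (X w)) $ a\<bar> * \<bar>((if A w = a then 1 else 0) / (q (X w) $ a) * (Y w - mu (X w) $ a))\<bar>" by (rule abs_mult)
        also have "\<dots> \<le> 2 * b * \<bar>((if A w = a then 1 else 0) / (q (X w) $ a) * (Y w - mu (X w) $ a))\<bar>" by (rule mult_right_mono[OF n]) simp
        also have "\<dots> = \<bar>2 * b * ((if A w = a then 1 else 0) / (q (X w) $ a) * (Y w - mu (X w) $ a))\<bar>" using b0 by (simp add: abs_mult)
        finally show "norm ((mu (X w) $ a - proj_cb C (mu (X w)) $ a) * ((if A w = a then 1 else 0) / (q (X w) $ a) * (Y w - mu (X w) $ a))) \<le> norm (2 * b * ((if A w = a then 1 else 0) / (q (X w) $ a) * (Y w - mu (X w) $ a)))" by simp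
      qed
    qed
    qed
    moreover have "(\<lambda>w. (mu (X w) $ a - proj_cb C (mu (X w)) $ a) * ((if A w = a then 1 else 0) / (q (X w) $ a) * (Y w - mu (X w) $ a))) = (\<lambda>w. ((mu (X w) $ a - proj_cb C (mu (X w)) $ a) * (if A w = a then 1 else 0) / q (X w) $ a) * (Y w - mu (X w) $ A w))"
      by (rule ext) (simp split: if_split)
    ultimately show ?thesis by simp
  qed
  have i3: "integrable M (\<lambda>w. ((muh (X w) $ a - proj_cb C (muh (X w)) $ a) * (mu (X w) $ a - muh (X w) $ a) / qh (X w) $ a) * (if A w = a then 1 else 0))" for a
    by (rule integrable_const_bound[where B="2 * b * (2 * b) / \<epsilon>"]) (use be[of a] b0 e in \<open>auto elim!: eventually_mono\<close>)
  have ie: "integrable M (\<lambda>w. ((muh (X w) $ a - proj_cb C (muh (X w)) $ a) * (mu (X w) $ a - muh (X w) $ a) / qh (X w) $ a) * q (X w) $ a)" for a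
  proof (rule integrable_const_bound[where B="2 * b * (2 * b) / \<epsilon>"])
    show "AE w in M. norm (((muh (X w) $ a - proj_cb C (muh (X w)) $ a) * (mu (X w) $ a - muh (X w) $ a) / qh (X w) $ a) * q (X w) $ a) \<le> 2 * b * (2 * b) / \<epsilon>"
      using be[of a] qAE
    proof eventually_elim
      case (elim w)
      then have "0 \<le> q (X w) $ a" "q (X w) $ a \<le> 1" by auto
      then have "\<bar>((muh (X w) $ a - proj_cb C (muh (X w)) $ a) * (mu (X w) $ a - muh (X w) $ a) / qh (X w) $ a) * q (X w) $ a\<bar> \<le> \<bar>((muh (X w) $ a - proj_cb C (muh (X w)) $ a) * (mu (X w) $ a - muh (X w) $ a) / qh (X w) $ a)\<bar> * 1"
        unfolding abs_mult[of "((muh (X w) $ a - proj_cb C (muh (X w)) $ a) * (mu (X w) $ a - muh (X w) $ a) / qh (X w) $ a)"] by (intro mult_left_mono) auto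
      then show ?case using elim(1) by simp
    qed
  qed measurable
  have isq: "integrable M (\<lambda>w. (v (X w) $ a - proj_cb C (v (X w)) $ a)\<^sup>2)"
    if vm: "v \<in> borel_measurable N" and vb: "\<And>x a. \<bar>v x $ a\<bar> \<le> b" for v :: "'x \<Rightarrow> real^'p" and a
  proof (rule integrable_const_bound[where B="(2 * b)\<^sup>2"])
    show "(\<lambda>w. (v (X w) $ a - proj_cb C (v (X w)) $ a)\<^sup>2) \<in> borel_measurable M" using vm by measurable
    show "AE w in M. norm ((v (X w) $ a - proj_cb C (v (X w)) $ a)\<^sup>2) \<le> (2 * b)\<^sup>2"
    proof (rule AE_I2)
      fix w
      have "\<bar>v (X w) $ a - proj_cb C (v (X w)) $ a\<bar> \<le> 2 * b" using vb[of "X w" a] bP[of "v (X w)" a] by linarith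
      then have "\<bar>v (X w) $ a - proj_cb C (v (X w)) $ a\<bar>\<^sup>2 \<le> (2 * b)\<^sup>2" by (intro power_mono) auto
      then show "norm ((v (X w) $ a - proj_cb C (v (X w)) $ a)\<^sup>2) \<le> (2 * b)\<^sup>2" by simp
    qed
  qed
  have iQ1: "integrable M (\<lambda>w. \<Sum>a\<in>UNIV. (muh (X w) $ a - proj_cb C (muh (X w)) $ a)\<^sup>2)"
    by (rule Bochner_Integration.integrable_sum) (rule isq[OF muhm bmuh])
  have iQ2: "integrable M (\<lambda>w. \<Sum>a\<in>UNIV. (mu (X w) $ a - proj_cb C (mu (X w)) $ a)\<^sup>2)"
    by (rule Bochner_Integration.integrable_sum) (rule isq[OF mum bmu])
  have Zm: "(\<lambda>w. (Y w - mu (X w) $ A w)) \<in> borel_measurable M" by measurable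
  have E1: "(\<integral>w. ((muh (X w) $ a - proj_cb C (muh (X w)) $ a) / qh (X w) $ a * (if A w = a then 1 else 0)) * (Y w - mu (X w) $ A w) \<partial>M) = 0" for a
  proof (rule ce_orth[OF sfs2 _ Zm i1 ceZ])
    have "(\<lambda>w. (\<lambda>(x, b). (muh x $ a - proj_cb C (muh x) $ a) / qh x $ a * (if b = a then 1 else 0)) (X w, A w)) \<in> borel_measurable F2"
      by (rule measurable_compose[OF vF2]) measurable
    then show "(\<lambda>w. ((muh (X w) $ a - proj_cb C (muh (X w)) $ a) / qh (X w) $ a * (if A w = a then 1 else 0))) \<in> borel_measurable F2" by simp
  qed
  have E2: "(\<integral>w. ((mu (X w) $ a - proj_cb C (mu (X w)) $ a) * (if A w = a then 1 else 0) / q (X w) $ a) * (Y w - mu (X w) $ A w) \<partial>M) = 0" for a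
  proof (rule ce_orth[OF sfs2 _ Zm i2 ceZ])
    have "(\<lambda>w. (\<lambda>(x, b). (mu x $ a - proj_cb C (mu x) $ a) * (if b = a then 1 else 0) / q x $ a) (X w, A w)) \<in> borel_measurable F2"
      by (rule measurable_compose[OF vF2]) measurable
    then show "(\<lambda>w. ((mu (X w) $ a - proj_cb C (mu (X w)) $ a) * (if A w = a then 1 else 0) / q (X w) $ a)) \<in> borel_measurable F2" by simp
  qed
  have E3: "(\<integral>w. ((muh (X w) $ a - proj_cb C (muh (X w)) $ a) * (mu (X w) $ a - muh (X w) $ a) / qh (X w) $ a) * (if A w = a then 1 else 0) \<partial>M) = (\<integral>w. ((muh (X w) $ a - proj_cb C (muh (X w)) $ a) * (mu (X w) $ a - muh (X w) $ a) / qh (X w) $ a) * q (X w) $ a \<partial>M)" for a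
  proof -
    have ind: "indicator {w. A w = a} w = (if A w = a then 1 else 0)" for w by (auto simp: indicator_def)
    have "(\<integral>w. ((muh (X w) $ a - proj_cb C (muh (X w)) $ a) * (mu (X w) $ a - muh (X w) $ a) / qh (X w) $ a) * indicator {w. A w = a} w \<partial>M) = (\<integral>w. ((muh (X w) $ a - proj_cb C (muh (X w)) $ a) * (mu (X w) $ a - muh (X w) $ a) / qh (X w) $ a) * q (X w) $ a \<partial>M)"
    proof (rule ce_repl[OF sfs1])
      have "(\<lambda>w. (\<lambda>x. (muh x $ a - proj_cb C (muh x) $ a) * (mu x $ a - muh x $ a) / qh x $ a) (X w)) \<in> borel_measurable F1"
        by (rule measurable_compose[OF vF1]) measurable
      then show "(\<lambda>w. ((muh (X w) $ a - proj_cb C (muh (X w)) $ a) * (mu (X w) $ a - muh (X w) $ a) / qh (X w) $ a)) \<in> borel_measurable F1" by simp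
      show "indicator {w. A w = a} \<in> borel_measurable M" by measurable
      show "(\<lambda>w. q (X w) $ a) \<in> borel_measurable M" by measurable
      show "integrable M (\<lambda>w. ((muh (X w) $ a - proj_cb C (muh (X w)) $ a) * (mu (X w) $ a - muh (X w) $ a) / qh (X w) $ a) * indicator {w. A w = a} w)" unfolding ind by (rule i3)
      show "AE w in M. real_cond_exp M F1 (indicator {w. A w = a}) w = q (X w) $ a"
        using qce[of a] by eventually_elim simp
    qed
    then show ?thesis by (simp only: ind)
  qed
  have iS: "integrable M (\<lambda>w. \<Sum>a\<in>UNIV. 2 * (((muh (X w) $ a - proj_cb C (muh (X w)) $ a) / qh (X w) $ a * (if A w = a then 1 else 0)) * (Y w - mu (X w) $ A w)) - 2 * (((mu (X w) $ a - proj_cb C (mu (X w)) $ a) * (if A w = a then 1 else 0) / q (X w) $ a) * (Y w - mu (X w) $ A w)) + 2 * (((muh (X w) $ a - proj_cb C (muh (X w)) $ a) * (mu (X w) $ a - muh (X w) $ a) / qh (X w) $ a) * (if A w = a then 1 else 0)))"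
    by (intro Bochner_Integration.integrable_sum Bochner_Integration.integrable_add Bochner_Integration.integrable_diff integrable_mult_right i1 i2 i3)
  have intdiff: "(\<integral>w. phiC C A Y X muh qh w - phiC C A Y X mu q w \<partial>M)
     = (\<Sum>a\<in>UNIV. 2 * (\<integral>w. ((muh (X w) $ a - proj_cb C (muh (X w)) $ a) * (mu (X w) $ a - muh (X w) $ a) / qh (X w) $ a) * q (X w) $ a \<partial>M)) + ((\<integral>w. (\<Sum>a\<in>UNIV. (muh (X w) $ a - proj_cb C (muh (X w)) $ a)\<^sup>2) \<partial>M) - (\<integral>w. (\<Sum>a\<in>UNIV. (mu (X w) $ a - proj_cb C (mu (X w)) $ a)\<^sup>2) \<partial>M))"
  proof -
    have "(\<integral>w. phiC C A Y X muh qh w - phiC C A Y X mu q w \<partial>M)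
       = (\<integral>w. (\<Sum>a\<in>UNIV. 2 * (((muh (X w) $ a - proj_cb C (muh (X w)) $ a) / qh (X w) $ a * (if A w = a then 1 else 0)) * (Y w - mu (X w) $ A w)) - 2 * (((mu (X w) $ a - proj_cb C (mu (X w)) $ a) * (if A w = a then 1 else 0) / q (X w) $ a) * (Y w - mu (X w) $ A w)) + 2 * (((muh (X w) $ a - proj_cb C (muh (X w)) $ a) * (mu (X w) $ a - muh (X w) $ a) / qh (X w) $ a) * (if A w = a then 1 else 0))) + ((\<Sum>a\<in>UNIV. (muh (X w) $ a - proj_cb C (muh (X w)) $ a)\<^sup>2) - (\<Sum>a\<in>UNIV. (mu (X w) $ a - proj_cb C (mu (X w)) $ a)\<^sup>2)) \<partial>M)"
      unfolding ident by (simp add: mult.assoc)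
    also have "\<dots> = (\<integral>w. (\<Sum>a\<in>UNIV. 2 * (((muh (X w) $ a - proj_cb C (muh (X w)) $ a) / qh (X w) $ a * (if A w = a then 1 else 0)) * (Y w - mu (X w) $ A w)) - 2 * (((mu (X w) $ a - proj_cb C (mu (X w)) $ a) * (if A w = a then 1 else 0) / q (X w) $ a) * (Y w - mu (X w) $ A w)) + 2 * (((muh (X w) $ a - proj_cb C (muh (X w)) $ a) * (mu (X w) $ a - muh (X w) $ a) / qh (X w) $ a) * (if A w = a then 1 else 0))) \<partial>M) + ((\<integral>w. (\<Sum>a\<in>UNIV. (muh (X w) $ a - proj_cb C (muh (X w)) $ a)\<^sup>2) \<partial>M) - (\<integral>w. (\<Sum>a\<in>UNIV. (mu (X w) $ a - proj_cb C (mu (X w)) $ a)\<^sup>2) \<partial>M))"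
      using iS iQ1 iQ2 by simp
    also have "(\<integral>w. (\<Sum>a\<in>UNIV. 2 * (((muh (X w) $ a - proj_cb C (muh (X w)) $ a) / qh (X w) $ a * (if A w = a then 1 else 0)) * (Y w - mu (X w) $ A w)) - 2 * (((mu (X w) $ a - proj_cb C (mu (X w)) $ a) * (if A w = a then 1 else 0) / q (X w) $ a) * (Y w - mu (X w) $ A w)) + 2 * (((muh (X w) $ a - proj_cb C (muh (X w)) $ a) * (mu (X w) $ a - muh (X w) $ a) / qh (X w) $ a) * (if A w = a then 1 else 0))) \<partial>M)
       = (\<Sum>a\<in>UNIV. (\<integral>w. 2 * (((muh (X w) $ a - proj_cb C (muh (X w)) $ a) / qh (X w) $ a * (if A w = a then 1 else 0)) * (Y w - mu (X w) $ A w)) - 2 * (((mu (X w) $ a - proj_cb C (mu (X w)) $ a) * (if A w = a then 1 else 0) / q (X w) $ a) * (Y w - mu (X w) $ A w)) + 2 * (((muh (X w) $ a - proj_cb C (muh (X w)) $ a) * (mu (X w) $ a - muh (X w) $ a) / qh (X w) $ a) * (if A w = a then 1 else 0)) \<partial>M))"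
      by (rule Bochner_Integration.integral_sum) (intro Bochner_Integration.integrable_add Bochner_Integration.integrable_diff integrable_mult_right i1 i2 i3)
    also have "\<dots> = (\<Sum>a\<in>UNIV. 2 * (\<integral>w. ((muh (X w) $ a - proj_cb C (muh (X w)) $ a) * (mu (X w) $ a - muh (X w) $ a) / qh (X w) $ a) * q (X w) $ a \<partial>M))"
    proof (rule sum.cong[OF refl])
      fix a
      have "(\<integral>w. 2 * (((muh (X w) $ a - proj_cb C (muh (X w)) $ a) / qh (X w) $ a * (if A w = a then 1 else 0)) * (Y w - mu (X w) $ A w)) - 2 * (((mu (X w) $ a - proj_cb C (mu (X w)) $ a) * (if A w = a then 1 else 0) / q (X w) $ a) * (Y w - mu (X w) $ A w)) + 2 * (((muh (X w) $ a - proj_cb C (muh (X w)) $ a) * (mu (X w) $ a - muh (X w) $ a) / qh (X w) $ a) * (if A w = a then 1 else 0)) \<partial>M)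
         = 2 * (\<integral>w. ((muh (X w) $ a - proj_cb C (muh (X w)) $ a) / qh (X w) $ a * (if A w = a then 1 else 0)) * (Y w - mu (X w) $ A w) \<partial>M) - 2 * (\<integral>w. ((mu (X w) $ a - proj_cb C (mu (X w)) $ a) * (if A w = a then 1 else 0) / q (X w) $ a) * (Y w - mu (X w) $ A w) \<partial>M) + 2 * (\<integral>w. ((muh (X w) $ a - proj_cb C (muh (X w)) $ a) * (mu (X w) $ a - muh (X w) $ a) / qh (X w) $ a) * (if A w = a then 1 else 0) \<partial>M)"
        by (rule int_lin3[OF i1 i2 i3])
      then show "(\<integral>w. 2 * (((muh (X w) $ a - proj_cb C (muh (X w)) $ a) / qh (X w) $ a * (if A w = a then 1 else 0)) * (Y w - mu (X w) $ A w)) - 2 * (((mu (X w) $ a - proj_cb C (mu (X w)) $ a) * (if A w = a then 1 else 0) / q (X w) $ a) * (Y w - mu (X w) $ A w)) + 2 * (((muh (X w) $ a - proj_cb C (muh (X w)) $ a) * (mu (X w) $ a - muh (X w) $ a) / qh (X w) $ a) * (if A w = a then 1 else 0)) \<partial>M) = 2 * (\<integral>w. ((muh (X w) $ a - proj_cb C (muh (X w)) $ a) * (mu (X w) $ a - muh (X w) $ a) / qh (X w) $ a) * q (X w) $ a \<partial>M)"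
        using E1[of a] E2[of a] E3[of a] by simp
    qed
    finally show ?thesis .
  qed
  have iT: "integrable M (\<lambda>w. (\<Sum>a\<in>UNIV. 2 * ((muh (X w) $ a - proj_cb C (muh (X w)) $ a) * (mu (X w) $ a - muh (X w) $ a) / qh (X w) $ a) * q (X w) $ a) + ((\<Sum>a\<in>UNIV. (muh (X w) $ a - proj_cb C (muh (X w)) $ a)\<^sup>2) - (\<Sum>a\<in>UNIV. (mu (X w) $ a - proj_cb C (mu (X w)) $ a)\<^sup>2)))"
    by (rule Bochner_Integration.integrable_add[OF Bochner_Integration.integrable_sum[OF int2m[OF ie]] Bochner_Integration.integrable_diff[OF iQ1 iQ2]])
  have intT: "(\<integral>w. phiC C A Y X muh qh w - phiC C A Y X mu q w \<partial>M)
      = (\<integral>w. (\<Sum>a\<in>UNIV. 2 * ((muh (X w) $ a - proj_cb C (muh (X w)) $ a) * (mu (X w) $ a - muh (X w) $ a) / qh (X w) $ a) * q (X w) $ a) + ((\<Sum>a\<in>UNIV. (muh (X w) $ a - proj_cb C (muh (X w)) $ a)\<^sup>2) - (\<Sum>a\<in>UNIV. (mu (X w) $ a - proj_cb C (mu (X w)) $ a)\<^sup>2)) \<partial>M)"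
  proof -
    have "(\<integral>w. (\<Sum>a\<in>UNIV. 2 * ((muh (X w) $ a - proj_cb C (muh (X w)) $ a) * (mu (X w) $ a - muh (X w) $ a) / qh (X w) $ a) * q (X w) $ a) + ((\<Sum>a\<in>UNIV. (muh (X w) $ a - proj_cb C (muh (X w)) $ a)\<^sup>2) - (\<Sum>a\<in>UNIV. (mu (X w) $ a - proj_cb C (mu (X w)) $ a)\<^sup>2)) \<partial>M) = (\<integral>w. (\<Sum>a\<in>UNIV. 2 * ((muh (X w) $ a - proj_cb C (muh (X w)) $ a) * (mu (X w) $ a - muh (X w) $ a) / qh (X w) $ a) * q (X w) $ a) \<partial>M) + ((\<integral>w. (\<Sum>a\<in>UNIV. (muh (X w) $ a - proj_cb C (muh (X w)) $ a)\<^sup>2) \<partial>M) - (\<integral>w. (\<Sum>a\<in>UNIV. (mu (X w) $ a - proj_cb C (mu (X w)) $ a)\<^sup>2) \<partial>M))"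
      by (simp only: Bochner_Integration.integral_add[OF Bochner_Integration.integrable_sum[OF int2m[OF ie]] Bochner_Integration.integrable_diff[OF iQ1 iQ2]]
           Bochner_Integration.integral_diff[OF iQ1 iQ2])
    also have "(\<integral>w. (\<Sum>a\<in>UNIV. 2 * ((muh (X w) $ a - proj_cb C (muh (X w)) $ a) * (mu (X w) $ a - muh (X w) $ a) / qh (X w) $ a) * q (X w) $ a) \<partial>M) = (\<Sum>a\<in>UNIV. (\<integral>w. 2 * ((muh (X w) $ a - proj_cb C (muh (X w)) $ a) * (mu (X w) $ a - muh (X w) $ a) / qh (X w) $ a) * q (X w) $ a \<partial>M))"
      by (rule Bochner_Integration.integral_sum[OF int2m[OF ie]])
    also have "\<dots> = (\<Sum>a\<in>UNIV. 2 * (\<integral>w. ((muh (X w) $ a - proj_cb C (muh (X w)) $ a) * (mu (X w) $ a - muh (X w) $ a) / qh (X w) $ a) * q (X w) $ a \<partial>M))"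
      by (simp only: int2)
    finally show ?thesis unfolding intdiff by simp
  qed
  have TB: "AE w in M. \<bar>((\<Sum>a\<in>UNIV. 2 * ((muh (X w) $ a - proj_cb C (muh (X w)) $ a) * (mu (X w) $ a - muh (X w) $ a) / qh (X w) $ a) * q (X w) $ a) + ((\<Sum>a\<in>UNIV. (muh (X w) $ a - proj_cb C (muh (X w)) $ a)\<^sup>2) - (\<Sum>a\<in>UNIV. (mu (X w) $ a - proj_cb C (mu (X w)) $ a)\<^sup>2)))\<bar> \<le> (\<Sum>a\<in>UNIV. 4 * b / \<epsilon> * (\<bar>(muh (X w) $ a - mu (X w) $ a)\<bar> * \<bar>(qh (X w) $ a - q (X w) $ a)\<bar>) + 8 * b * \<bar>(muh (X w) $ a - mu (X w) $ a)\<bar> + (muh (X w) $ a - mu (X w) $ a)\<^sup>2)"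
    using qhAE2
  proof eventually_elim
    case (elim w)
    show ?case
      by (rule pointwise_bound[where m="\<lambda>a. mu (X w) $ a" and mh="\<lambda>a. muh (X w) $ a"
            and P="\<lambda>a. proj_cb C (mu (X w)) $ a" and Ph="\<lambda>a. proj_cb C (muh (X w)) $ a"
            and q="\<lambda>a. q (X w) $ a" and qh="\<lambda>a. qh (X w) $ a" and b=b and e=\<epsilon>])
         (use e elim bmu bmuh bP proj_min[OF fin] in auto)
  qed
  have bd_d: "\<bar>(muh (X w) $ a - mu (X w) $ a)\<bar> \<le> 2 * b" for w a using bmu[of "X w" a] bmuh[of "X w" a] by linarith
  have bd_D: "AE w in M. \<bar>(qh (X w) $ a - q (X w) $ a)\<bar> \<le> 1" for a
    using qAE qhAE2
  proof eventually_elim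
    case (elim w)
    then have "0 \<le> q (X w) $ a" "q (X w) $ a \<le> 1" "\<epsilon> \<le> qh (X w) $ a" "qh (X w) $ a \<le> 1 - \<epsilon>" by auto
    then show ?case using e by linarith
  qed
  have id: "integrable M (\<lambda>w. \<bar>(muh (X w) $ a - mu (X w) $ a)\<bar>)" for a
    by (rule integrable_const_bound[where B="2 * b"]) (use bd_d in auto)
  have id2: "integrable M (\<lambda>w. (muh (X w) $ a - mu (X w) $ a)\<^sup>2)" for a
  proof (rule integrable_const_bound[where B="(2 * b)\<^sup>2"])
    show "AE w in M. norm ((muh (X w) $ a - mu (X w) $ a)\<^sup>2) \<le> (2 * b)\<^sup>2"
    proof (rule AE_I2)
      fix w
      have "\<bar>muh (X w) $ a - mu (X w) $ a\<bar>\<^sup>2 \<le> (2 * b)\<^sup>2" using bd_d[of w a] by (intro power_mono) auto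
      then show "norm ((muh (X w) $ a - mu (X w) $ a)\<^sup>2) \<le> (2 * b)\<^sup>2" by simp
    qed
  qed measurable
  have iD2: "integrable M (\<lambda>w. (qh (X w) $ a - q (X w) $ a)\<^sup>2)" for a
  proof (rule integrable_const_bound[where B=1])
    show "AE w in M. norm ((qh (X w) $ a - q (X w) $ a)\<^sup>2) \<le> 1"
      using bd_D[of a] by eventually_elim (simp add: abs_square_le_1)
  qed measurable
  have idD: "integrable M (\<lambda>w. (muh (X w) $ a - mu (X w) $ a) * (qh (X w) $ a - q (X w) $ a))" for a
  proof (rule integrable_const_bound[where B="2 * b"])
    show "AE w in M. norm ((muh (X w) $ a - mu (X w) $ a) * (qh (X w) $ a - q (X w) $ a)) \<le> 2 * b"
      using bd_D[of a]
    proof eventually_elim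
      case (elim w)
      have "\<bar>(muh (X w) $ a - mu (X w) $ a)\<bar> * \<bar>(qh (X w) $ a - q (X w) $ a)\<bar> \<le> 2 * b * 1" using bd_d[of w a] elim b0 by (intro mult_mono) auto
      then show ?case by (simp add: abs_mult)
    qed
  qed measurable
  have iadD: "integrable M (\<lambda>w. \<bar>(muh (X w) $ a - mu (X w) $ a)\<bar> * \<bar>(qh (X w) $ a - q (X w) $ a)\<bar>)" for a
    using integrable_abs[OF idD[of a]] by (simp add: abs_mult)
  have iBn_a: "integrable M (\<lambda>w. 4 * b / \<epsilon> * (\<bar>(muh (X w) $ a - mu (X w) $ a)\<bar> * \<bar>(qh (X w) $ a - q (X w) $ a)\<bar>) + 8 * b * \<bar>(muh (X w) $ a - mu (X w) $ a)\<bar> + (muh (X w) $ a - mu (X w) $ a)\<^sup>2)" for a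
    by (rule Bochner_Integration.integrable_add[OF Bochner_Integration.integrable_add[OF integrable_mult_right[OF iadD] integrable_mult_right[OF id]] id2])
  have iBn: "integrable M (\<lambda>w. (\<Sum>a\<in>UNIV. 4 * b / \<epsilon> * (\<bar>(muh (X w) $ a - mu (X w) $ a)\<bar> * \<bar>(qh (X w) $ a - q (X w) $ a)\<bar>) + 8 * b * \<bar>(muh (X w) $ a - mu (X w) $ a)\<bar> + (muh (X w) $ a - mu (X w) $ a)\<^sup>2))"
    by (rule Bochner_Integration.integrable_sum[OF iBn_a])
  have Bn0: "0 \<le> (\<Sum>a\<in>UNIV. 4 * b / \<epsilon> * (\<bar>(muh (X w) $ a - mu (X w) $ a)\<bar> * \<bar>(qh (X w) $ a - q (X w) $ a)\<bar>) + 8 * b * \<bar>(muh (X w) $ a - mu (X w) $ a)\<bar> + (muh (X w) $ a - mu (X w) $ a)\<^sup>2)" for w using b0 e by (intro sum_nonneg add_nonneg_nonneg mult_nonneg_nonneg) auto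
  have intBn: "(\<integral>w. (\<Sum>a\<in>UNIV. 4 * b / \<epsilon> * (\<bar>(muh (X w) $ a - mu (X w) $ a)\<bar> * \<bar>(qh (X w) $ a - q (X w) $ a)\<bar>) + 8 * b * \<bar>(muh (X w) $ a - mu (X w) $ a)\<bar> + (muh (X w) $ a - mu (X w) $ a)\<^sup>2) \<partial>M) = (\<Sum>a\<in>UNIV. 4 * b / \<epsilon> * (\<integral>w. \<bar>(muh (X w) $ a - mu (X w) $ a)\<bar> * \<bar>(qh (X w) $ a - q (X w) $ a)\<bar> \<partial>M) + 8 * b * (\<integral>w. \<bar>(muh (X w) $ a - mu (X w) $ a)\<bar> \<partial>M) + (\<integral>w. (muh (X w) $ a - mu (X w) $ a)\<^sup>2 \<partial>M))"
  proof -
    have "(\<integral>w. (\<Sum>a\<in>UNIV. 4 * b / \<epsilon> * (\<bar>(muh (X w) $ a - mu (X w) $ a)\<bar> * \<bar>(qh (X w) $ a - q (X w) $ a)\<bar>) + 8 * b * \<bar>(muh (X w) $ a - mu (X w) $ a)\<bar> + (muh (X w) $ a - mu (X w) $ a)\<^sup>2) \<partial>M) = (\<Sum>a\<in>UNIV. (\<integral>w. 4 * b / \<epsilon> * (\<bar>(muh (X w) $ a - mu (X w) $ a)\<bar> * \<bar>(qh (X w) $ a - q (X w) $ a)\<bar>) + 8 * b * \<bar>(muh (X w) $ a - mu (X w) $ a)\<bar> + (muh (X w) $ a - mu (X w) $ a)\<^sup>2 \<partial>M))"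
      by (rule Bochner_Integration.integral_sum[OF iBn_a])
    also have "\<dots> = (\<Sum>a\<in>UNIV. 4 * b / \<epsilon> * (\<integral>w. \<bar>(muh (X w) $ a - mu (X w) $ a)\<bar> * \<bar>(qh (X w) $ a - q (X w) $ a)\<bar> \<partial>M) + 8 * b * (\<integral>w. \<bar>(muh (X w) $ a - mu (X w) $ a)\<bar> \<partial>M) + (\<integral>w. (muh (X w) $ a - mu (X w) $ a)\<^sup>2 \<partial>M))"
    proof (rule sum.cong[OF refl])
      fix a
      show "(\<integral>w. 4 * b / \<epsilon> * (\<bar>(muh (X w) $ a - mu (X w) $ a)\<bar> * \<bar>(qh (X w) $ a - q (X w) $ a)\<bar>) + 8 * b * \<bar>(muh (X w) $ a - mu (X w) $ a)\<bar> + (muh (X w) $ a - mu (X w) $ a)\<^sup>2 \<partial>M) = 4 * b / \<epsilon> * (\<integral>w. \<bar>(muh (X w) $ a - mu (X w) $ a)\<bar> * \<bar>(qh (X w) $ a - q (X w) $ a)\<bar> \<partial>M) + 8 * b * (\<integral>w. \<bar>(muh (X w) $ a - mu (X w) $ a)\<bar> \<partial>M) + (\<integral>w. (muh (X w) $ a - mu (X w) $ a)\<^sup>2 \<partial>M)"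
        by (simp only: Bochner_Integration.integral_add[OF Bochner_Integration.integrable_add[OF integrable_mult_right[OF iadD] integrable_mult_right[OF id]] id2]
              Bochner_Integration.integral_add[OF integrable_mult_right[OF iadD] integrable_mult_right[OF id]]
              integral_mult_right_zero)
    qed
    finally show ?thesis .
  qed
  have per_a: "4 * b / \<epsilon> * (\<integral>w. \<bar>(muh (X w) $ a - mu (X w) $ a)\<bar> * \<bar>(qh (X w) $ a - q (X w) $ a)\<bar> \<partial>M) + 8 * b * (\<integral>w. \<bar>(muh (X w) $ a - mu (X w) $ a)\<bar> \<partial>M) + (\<integral>w. (muh (X w) $ a - mu (X w) $ a)\<^sup>2 \<partial>M)
      \<le> 4 * b / \<epsilon> * (L2norm M (\<lambda>w. muh (X w) $ a - mu (X w) $ a) * L2norm M (\<lambda>w. qh (X w) $ a - q (X w) $ a)) + 8 * b * L1norm M (\<lambda>w. muh (X w) $ a - mu (X w) $ a) + (L2norm M (\<lambda>w. muh (X w) $ a - mu (X w) $ a))\<^sup>2" for a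
  proof -
    have cs: "(\<integral>w. \<bar>(muh (X w) $ a - mu (X w) $ a)\<bar> * \<bar>(qh (X w) $ a - q (X w) $ a)\<bar> \<partial>M) \<le> L2norm M (\<lambda>w. muh (X w) $ a - mu (X w) $ a) * L2norm M (\<lambda>w. qh (X w) $ a - q (X w) $ a)"
      unfolding L2norm_def by (rule cs_integral[OF id2 iD2 idD])
    have l1: "(\<integral>w. \<bar>(muh (X w) $ a - mu (X w) $ a)\<bar> \<partial>M) = L1norm M (\<lambda>w. muh (X w) $ a - mu (X w) $ a)" unfolding L1norm_def ..
    have l2: "(\<integral>w. (muh (X w) $ a - mu (X w) $ a)\<^sup>2 \<partial>M) = (L2norm M (\<lambda>w. muh (X w) $ a - mu (X w) $ a))\<^sup>2" unfolding L2norm_def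
      by (simp add: integral_nonneg_AE)
    have c1: "0 \<le> 4 * b / \<epsilon>" using b0 e by simp
    show ?thesis unfolding l1 l2 using mult_left_mono[OF cs c1] by linarith
  qed
  have "\<bar>\<integral>w. phiC C A Y X muh qh w - phiC C A Y X mu q w \<partial>M\<bar> = \<bar>\<integral>w. ((\<Sum>a\<in>UNIV. 2 * ((muh (X w) $ a - proj_cb C (muh (X w)) $ a) * (mu (X w) $ a - muh (X w) $ a) / qh (X w) $ a) * q (X w) $ a) + ((\<Sum>a\<in>UNIV. (muh (X w) $ a - proj_cb C (muh (X w)) $ a)\<^sup>2) - (\<Sum>a\<in>UNIV. (mu (X w) $ a - proj_cb C (mu (X w)) $ a)\<^sup>2))) \<partial>M\<bar>"
    unfolding intT ..
  also have "\<dots> \<le> (\<integral>w. \<bar>((\<Sum>a\<in>UNIV. 2 * ((muh (X w) $ a - proj_cb C (muh (X w)) $ a) * (mu (X w) $ a - muh (X w) $ a) / qh (X w) $ a) * q (X w) $ a) + ((\<Sum>a\<in>UNIV. (muh (X w) $ a - proj_cb C (muh (X w)) $ a)\<^sup>2) - (\<Sum>a\<in>UNIV. (mu (X w) $ a - proj_cb C (mu (X w)) $ a)\<^sup>2)))\<bar> \<partial>M)" by (rule integral_abs_bound)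
  also have "\<dots> \<le> (\<integral>w. (\<Sum>a\<in>UNIV. 4 * b / \<epsilon> * (\<bar>(muh (X w) $ a - mu (X w) $ a)\<bar> * \<bar>(qh (X w) $ a - q (X w) $ a)\<bar>) + 8 * b * \<bar>(muh (X w) $ a - mu (X w) $ a)\<bar> + (muh (X w) $ a - mu (X w) $ a)\<^sup>2) \<partial>M)"
    by (rule integral_mono_AE'[OF iBn TB]) (use Bn0 in auto)
  also have "\<dots> \<le> (\<Sum>a\<in>UNIV. 4 * b / \<epsilon> * (L2norm M (\<lambda>w. muh (X w) $ a - mu (X w) $ a) * L2norm M (\<lambda>w. qh (X w) $ a - q (X w) $ a)) + 8 * b * L1norm M (\<lambda>w. muh (X w) $ a - mu (X w) $ a) + (L2norm M (\<lambda>w. muh (X w) $ a - mu (X w) $ a))\<^sup>2)"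
    unfolding intBn by (rule sum_mono) (rule per_a)
  also have "\<dots> \<le> (real CARD('p) * (4 * b / \<epsilon> + 1 + 8 * b)) * ((MAX a\<in>UNIV. L1norm M (\<lambda>w. muh (X w) $ a - mu (X w) $ a)) + (MAX a\<in>UNIV. L2norm M (\<lambda>w. muh (X w) $ a - mu (X w) $ a) * (L2norm M (\<lambda>w. muh (X w) $ a - mu (X w) $ a) + L2norm M (\<lambda>w. qh (X w) $ a - q (X w) $ a))))"
    by (rule final_arith) (use b0 e in \<open>auto simp: L1norm_def L2norm_def intro!: integral_nonneg_AE\<close>)
  finally show ?thesis unfolding b_def .
qed

theorem lemmaA8:
  fixes B \<epsilon> :: real and k :: nat
  assumes "0 < \<epsilon>"
  shows "\<exists>K::real. \<forall>(M::'w measure) (N::'x measure) Y (A::'w \<Rightarrow> 'p::finite) X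
            (mu::'x \<Rightarrow> real^'p) pi muh pih.
     obs_model M N Y A X mu pi
     \<and> muh \<in> borel_measurable N \<and> pih \<in> borel_measurable N
     \<and> (\<forall>a x. \<bar>mu x $ a\<bar> \<le> B \<and> \<bar>muh x $ a\<bar> \<le> B)
     \<and> (\<forall>a. AE w in M. \<epsilon> \<le> pih (X w) $ a \<and> pih (X w) $ a \<le> 1 - \<epsilon>)
     \<and> (\<forall>a. integrable M (\<lambda>w. (if A w = a then 1 else 0) / (pi (X w) $ a)
                                    * (Y w - mu (X w) $ a)))
     \<longrightarrow> (\<forall>C \<in> codebooks k mu.
           \<bar>\<integral>w. phiC C A Y X muh pih w - phiC C A Y X mu pi w \<partial>M\<bar>
           \<le> K * ((MAX a\<in>UNIV. L1norm M (\<lambda>w. muh (X w) $ a - mu (X w) $ a))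
                 + (MAX a\<in>UNIV. L2norm M (\<lambda>w. muh (X w) $ a - mu (X w) $ a)
                      * (L2norm M (\<lambda>w. muh (X w) $ a - mu (X w) $ a)
                         + L2norm M (\<lambda>w. pih (X w) $ a - pi (X w) $ a)))))"
  apply (rule exI[where x="real CARD('p) * (4 * (\<bar>B\<bar> + (\<Sum>a\<in>UNIV. \<bar>proj_cb {} (0::real^'p) $ a\<bar>)) / \<epsilon> + 1
                 + 8 * (\<bar>B\<bar> + (\<Sum>a\<in>UNIV. \<bar>proj_cb {} (0::real^'p) $ a\<bar>)))"])
  apply (intro allI impI ballI)
  apply (elim conjE)
  apply (rule main_bound[OF assms])
  apply assumption+
  done

end
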